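(* Call $\ket{\phi}\in\mathcal H$ a dark state if $L_k\ket{\phi}=0$ for all $k$ and $H\ket{\phi}=\omega\ket{\phi}$ for some $\omega\in\mathbb R$, and let $\mathcal D\subseteq\mathcal H$ be the linear span of all dark states. Suppose there is no nonzero subspace $\mathcal S\subseteq\mathcal H$ with $\mathcal S\perp\mathcal D$ and $L_k\mathcal S\subseteq\mathcal S$ for all $k$. Then every operator $X\neq 0$ on $\mathcal H$ satisfying $\mathcal L X=i\Lambda X$ for some $\Lambda\in\mathbb R$ is a linear combination of operators $\ket{\phi}\bra{\psi}$ with $\ket{\phi},\ket{\psi}$ dark states (equivalently, $X=P_{\mathcal D}XP_{\mathcal D}$, where $P_{\mathcal D}$ is the orthogonal projector onto $\mathcal D$).
   Context: $\mathcal H$ is a finite-dimensional complex Hilbert space, $H=H^\dagger$ is an operator on $\mathcal H$ (the Hamiltonian), $L_k$ ($k$ in a finite index set) are operators on $\mathcal H$ (Lindblad operators) and $\gamma_k>0$ are rates. The Liouvillian is the linear map on operators on $\mathcal H$ given by $\mathcal L\rho=-i[H,\rho]+\sum_k\gamma_k\big(2L_k\rho L_k^\dagger-\{L_k^\dagger L_k,\rho\}\big)$, where $\{X,Y\}=XY+YX$. *)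

theory Defs
  imports "HOL-Analysis.Analysis"
begin

definition cinner :: "complex^'n \<Rightarrow> complex^'n \<Rightarrow> complex" where
  "cinner x y = (\<Sum>i\<in>UNIV. cnj (x$i) * y$i)"

definition cscale :: "complex \<Rightarrow> complex^'n \<Rightarrow> complex^'n" where
  "cscale c v = (\<chi> i. c * v$i)"

definition msc :: "complex \<Rightarrow> complex^'n^'m \<Rightarrow> complex^'n^'m" where
  "msc c M = (\<chi> i j. c * M$i$j)"

definition madj :: "complex^'n^'m \<Rightarrow> complex^'m^'n" where
  "madj M = (\<chi> i j. cnj (M$j$i))"

definition outer :: "complex^'n \<Rightarrow> complex^'n \<Rightarrow> complex^'n^'n" where
  "outer phi psi = (\<chi> i j. phi$i * cnj (psi$j))"

definition liouvillian ::
  "complex^'n^'n \<Rightarrow> 'k set \<Rightarrow> ('k \<Rightarrow> complex^'n^'n) \<Rightarrow> ('k \<Rightarrow> real)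
     \<Rightarrow> complex^'n^'n \<Rightarrow> complex^'n^'n" where
  "liouvillian H K L \<gamma> \<rho> =
     msc (- \<i>) (H ** \<rho> - \<rho> ** H)
     + (\<Sum>k\<in>K. msc (complex_of_real (\<gamma> k))
          (msc 2 (L k ** \<rho> ** madj (L k))
           - (madj (L k) ** L k ** \<rho> + \<rho> ** (madj (L k) ** L k))))"

definition dark_state ::
  "complex^'n^'n \<Rightarrow> 'k set \<Rightarrow> ('k \<Rightarrow> complex^'n^'n) \<Rightarrow> complex^'n \<Rightarrow> bool" where
  "dark_state H K L \<phi> \<longleftrightarrow>
     (\<forall>k\<in>K. L k *v \<phi> = 0) \<and> (\<exists>\<omega>::real. H *v \<phi> = cscale (complex_of_real \<omega>) \<phi>)"

definition cspan :: "(complex^'n) set \<Rightarrow> (complex^'n) set" where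
  "cspan A = {x. \<exists>F c. finite F \<and> F \<subseteq> A \<and> x = (\<Sum>v\<in>F. cscale (c v) v)}"

definition dark_space ::
  "complex^'n^'n \<Rightarrow> 'k set \<Rightarrow> ('k \<Rightarrow> complex^'n^'n) \<Rightarrow> (complex^'n) set" where
  "dark_space H K L = cspan {\<phi>. dark_state H K L \<phi>}"

definition csubspace :: "(complex^'n) set \<Rightarrow> bool" where
  "csubspace S \<longleftrightarrow> 0 \<in> S \<and> (\<forall>x\<in>S. \<forall>y\<in>S. x + y \<in> S) \<and> (\<forall>c. \<forall>x\<in>S. cscale c x \<in> S)"

end

theory Submission
  imports Defs
begin

lemma cscale_nth[simp]: "cscale c v $ i = c * v $ i" by (simp add: cscale_def)
lemma msc_nth[simp]: "msc c M $ i $ j = c * M $ i $ j" by (simp add: msc_def)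
lemma madj_nth[simp]: "madj M $ i $ j = cnj (M $ j $ i)" by (simp add: madj_def)
lemma outer_nth[simp]: "outer a b $ i $ j = a $ i * cnj (b $ j)" by (simp add: outer_def)

global_interpretation cv: vector_space "cscale :: complex \<Rightarrow> complex^'n \<Rightarrow> complex^'n"
  by unfold_locales (simp_all add: vec_eq_iff algebra_simps)

global_interpretation cm: vector_space "msc :: complex \<Rightarrow> complex^'n^'m \<Rightarrow> complex^'n^'m"
  by unfold_locales (simp_all add: vec_eq_iff algebra_simps)

lemma cspan_eq: "cspan A = cv.span A"
  unfolding cspan_def cv.span_explicit by blast

lemma mm_nth: "(A ** B) $ i $ j = (\<Sum>k\<in>UNIV. A$i$k * B$k$j)"
  by (simp add: matrix_matrix_mult_def)
lemma mv_nth: "(A *v x) $ i = (\<Sum>j\<in>UNIV. A$i$j * x$j)"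
  by (simp add: matrix_vector_mult_def)

lemma mv_add_left: fixes A B :: "complex^'n^'m" shows "(A + B) *v x = A *v x + B *v x"
  by (simp add: vec_eq_iff mv_nth sum.distrib algebra_simps)
lemma mv_diff_left: fixes A B :: "complex^'n^'m" shows "(A - B) *v x = A *v x - B *v x"
  by (simp add: vec_eq_iff mv_nth sum_subtractf[symmetric] algebra_simps)
lemma mv_msc: fixes A :: "complex^'n^'m" shows "msc c A *v x = cscale c (A *v x)"
  by (simp add: vec_eq_iff mv_nth sum_distrib_left algebra_simps)
lemma mv_sum: fixes f :: "'k \<Rightarrow> complex^'n^'m" shows "finite S \<Longrightarrow> sum f S *v x = (\<Sum>k\<in>S. f k *v x)"
  by (induction S rule: finite_induct) (auto simp: mv_add_left vec_eq_iff mv_nth)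
lemma mv_mm: fixes A :: "complex^'n^'m" shows "(A ** B) *v x = A *v (B *v x)"
  by (simp add: matrix_vector_mul_assoc)
lemma mv_add_right: fixes A :: "complex^'n^'m" shows "A *v (x + y) = A *v x + A *v y"
  by (simp add: vec_eq_iff mv_nth sum.distrib algebra_simps)
lemma mv_diff_right: fixes A :: "complex^'n^'m" shows "A *v (x - y) = A *v x - A *v y"
  by (simp add: vec_eq_iff mv_nth sum_subtractf[symmetric] algebra_simps)
lemma mv_cscale_right: fixes A :: "complex^'n^'m" shows "A *v (cscale c x) = cscale c (A *v x)"
  by (simp add: vec_eq_iff mv_nth sum_distrib_left algebra_simps)
lemma mv_zero_right: fixes A :: "complex^'n^'m" shows "A *v 0 = 0"
  by (simp add: vec_eq_iff mv_nth)
lemma mv_sum_right: fixes A :: "complex^'n^'m" shows "finite S \<Longrightarrow> A *v (sum f S) = (\<Sum>k\<in>S. A *v f k)"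
  by (induction S rule: finite_induct) (simp_all add: mv_add_right mv_zero_right)

lemmas mv_simps = mv_add_left mv_diff_left mv_msc mv_sum mv_mm mv_add_right mv_diff_right
  mv_cscale_right mv_zero_right mv_sum_right

lemma cinner_add_left: "cinner (x + y) z = cinner x z + cinner y z"
  by (simp add: cinner_def sum.distrib algebra_simps)
lemma cinner_add_right: "cinner z (x + y) = cinner z x + cinner z y"
  by (simp add: cinner_def sum.distrib algebra_simps)
lemma cinner_diff_left: "cinner (x - y) z = cinner x z - cinner y z"
  by (simp add: cinner_def sum_subtractf algebra_simps)
lemma cinner_diff_right: "cinner z (x - y) = cinner z x - cinner z y"
  by (simp add: cinner_def sum_subtractf algebra_simps)
lemma cinner_cscale_left: "cinner (cscale c x) z = cnj c * cinner x z"
  by (simp add: cinner_def sum_distrib_left algebra_simps)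
lemma cinner_cscale_right: "cinner z (cscale c x) = c * cinner z x"
  by (simp add: cinner_def sum_distrib_left algebra_simps)
lemma cinner_zero_left: "cinner 0 x = 0" by (simp add: cinner_def)
lemma cinner_zero_right: "cinner x 0 = 0" by (simp add: cinner_def)
lemma cinner_sum_right: "finite S \<Longrightarrow> cinner z (sum f S) = (\<Sum>k\<in>S. cinner z (f k))"
  by (induction S rule: finite_induct) (simp_all add: cinner_add_right cinner_zero_right)
lemma cinner_sum_left: "finite S \<Longrightarrow> cinner (sum f S) z = (\<Sum>k\<in>S. cinner (f k) z)"
  by (induction S rule: finite_induct) (simp_all add: cinner_add_left cinner_zero_left)
lemma cinner_sym: "cinner y x = cnj (cinner x y)"
  by (simp add: cinner_def mult.commute)
lemma cinner_adj: "cinner (A *v x) y = cinner x (madj A *v y)"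
proof -
  have "cinner (A *v x) y = (\<Sum>i\<in>UNIV. \<Sum>j\<in>UNIV. cnj (A$i$j) * cnj (x$j) * y$i)"
    by (simp add: cinner_def mv_nth sum_distrib_right)
  also have "\<dots> = (\<Sum>j\<in>UNIV. \<Sum>i\<in>UNIV. cnj (A$i$j) * cnj (x$j) * y$i)"
    by (rule sum.swap)
  also have "\<dots> = cinner x (madj A *v y)"
    by (simp add: cinner_def mv_nth sum_distrib_left algebra_simps)
  finally show ?thesis .
qed
lemma Re_cinner: "Re (cinner x y) = inner x y"
  by (simp add: cinner_def inner_vec_def inner_complex_def Re_sum)
lemma Im_cinner_self: "Im (cinner x x) = 0"
  by (simp add: cinner_def Im_sum)
lemma cinner_self: "cinner x x = complex_of_real (inner x x)"
  by (simp add: complex_eq_iff Re_cinner Im_cinner_self)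
lemma cinner_self_eq0: "cinner x x = 0 \<longleftrightarrow> x = 0"
  by (simp add: cinner_self)

lemmas cinner_simps = cinner_add_left cinner_add_right cinner_diff_left cinner_diff_right
  cinner_cscale_left cinner_cscale_right cinner_zero_left cinner_zero_right cinner_sum_left cinner_sum_right

lemma madj_madj[simp]: "madj (madj A) = A" by (simp add: vec_eq_iff)
lemma madj_mm: "madj (A ** B) = madj B ** madj A"
  by (simp add: vec_eq_iff mm_nth mult.commute)

lemma vec_eq_cinner: "(\<And>z. cinner z x = cinner z y) \<Longrightarrow> x = y"
  by (metis cinner_diff_right cinner_self_eq0 right_minus_eq)

lemma cinner_axis: "cinner (axis i 1) x = x $ i"
  unfolding cinner_def axis_def by (simp add: if_distrib if_distribR cong: if_cong)

type_synonym 'n mat = "complex^'n^'n"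

lemma mm_add_left: fixes A B :: "complex^'n^'m" shows "(A + B) ** C = A ** C + B ** C"
  by (simp add: vec_eq_iff mm_nth sum.distrib algebra_simps)
lemma mm_add_right: fixes A :: "complex^'n^'m" shows "A ** (B + C) = A ** B + A ** C"
  by (simp add: vec_eq_iff mm_nth sum.distrib algebra_simps)
lemma mm_diff_left: fixes A B :: "complex^'n^'m" shows "(A - B) ** C = A ** C - B ** C"
  by (simp add: vec_eq_iff mm_nth sum_subtractf[symmetric] algebra_simps)
lemma mm_diff_right: fixes A :: "complex^'n^'m" shows "A ** (B - C) = A ** B - A ** C"
  by (simp add: vec_eq_iff mm_nth sum_subtractf[symmetric] algebra_simps)
lemma mm_msc_left: fixes A :: "complex^'n^'m" shows "msc c A ** B = msc c (A ** B)"
  by (simp add: vec_eq_iff mm_nth sum_distrib_left algebra_simps)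
lemma mm_msc_right: fixes A :: "complex^'n^'m" shows "A ** msc c B = msc c (A ** B)"
  by (simp add: vec_eq_iff mm_nth sum_distrib_left algebra_simps)
lemma mm_sum_left: fixes f :: "'k \<Rightarrow> complex^'n^'m" shows "finite S \<Longrightarrow> sum f S ** B = (\<Sum>k\<in>S. f k ** B)"
  by (induction S rule: finite_induct) (auto simp: mm_add_left)
lemma mm_sum_right: fixes A :: "complex^'n^'m" shows "finite S \<Longrightarrow> A ** sum f S = (\<Sum>k\<in>S. A ** f k)"
  by (induction S rule: finite_induct) (auto simp: mm_add_right)
lemma mm_neg_left: fixes A :: "complex^'n^'m" shows "(- A) ** B = - (A ** B)"
  by (simp add: vec_eq_iff mm_nth sum_negf)
lemma mm_neg_right: fixes A :: "complex^'n^'m" shows "A ** (- B) = - (A ** B)"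
  by (simp add: vec_eq_iff mm_nth sum_negf)

lemmas mm_dist = mm_add_left mm_add_right mm_diff_left mm_diff_right mm_msc_left mm_msc_right
  mm_sum_left mm_sum_right mm_neg_left mm_neg_right

lemma madj_add: "madj (A + B) = madj A + madj B" by (simp add: vec_eq_iff)
lemma madj_diff: "madj (A - B) = madj A - madj B" by (simp add: vec_eq_iff)
lemma madj_msc: "madj (msc c A) = msc (cnj c) (madj A)" by (simp add: vec_eq_iff)
lemma madj_zero[simp]: "madj 0 = 0" by (simp add: vec_eq_iff)
lemma madj_sum: "finite S \<Longrightarrow> madj (sum f S) = (\<Sum>k\<in>S. madj (f k))"
  by (induction S rule: finite_induct) (auto simp: madj_add)

lemma msc_add: "msc c (A + B) = msc c A + msc c B" by (simp add: vec_eq_iff algebra_simps)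
lemma msc_diff: "msc c (A - B) = msc c A - msc c B" by (simp add: vec_eq_iff algebra_simps)
lemma msc_zero[simp]: "msc c 0 = 0" by (simp add: vec_eq_iff)
lemma msc_sum: "finite S \<Longrightarrow> msc c (sum f S) = (\<Sum>k\<in>S. msc c (f k))"
  by (induction S rule: finite_induct) (auto simp: msc_add)
lemma msc_msc: "msc a (msc b A) = msc (a*b) A" by (simp add: vec_eq_iff)
lemma msc_neg: "msc c (- A) = - msc c A" by (simp add: vec_eq_iff)

definition hs :: "complex^'n^'m \<Rightarrow> complex^'n^'m \<Rightarrow> complex" where
  "hs A B = (\<Sum>i\<in>UNIV. \<Sum>j\<in>UNIV. cnj (A$i$j) * B$i$j)"

lemma inner_hs: fixes A B :: "complex^'n^'m" shows "inner A B = Re (hs A B)"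
  by (simp add: hs_def inner_vec_def inner_complex_def Re_sum)

lemma hs_add_left: "hs (A + B) C = hs A C + hs B C"
  by (simp add: hs_def sum.distrib algebra_simps)
lemma hs_add_right: "hs C (A + B) = hs C A + hs C B"
  by (simp add: hs_def sum.distrib algebra_simps)
lemma hs_diff_left: "hs (A - B) C = hs A C - hs B C"
  by (simp add: hs_def sum_subtractf[symmetric] algebra_simps)
lemma hs_diff_right: "hs C (A - B) = hs C A - hs C B"
  by (simp add: hs_def sum_subtractf[symmetric] algebra_simps)
lemma hs_msc_left: "hs (msc c A) B = cnj c * hs A B"
  by (simp add: hs_def sum_distrib_left algebra_simps)
lemma hs_msc_right: "hs A (msc c B) = c * hs A B"
  by (simp add: hs_def sum_distrib_left algebra_simps)
lemma hs_zero_left: "hs 0 B = 0" by (simp add: hs_def)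
lemma hs_sum_left: "finite S \<Longrightarrow> hs (sum f S) B = (\<Sum>k\<in>S. hs (f k) B)"
  by (induction S rule: finite_induct) (auto simp: hs_add_left hs_zero_left)
lemma hs_zero_right: "hs B 0 = 0" by (simp add: hs_def)
lemma hs_sum_right: "finite S \<Longrightarrow> hs B (sum f S) = (\<Sum>k\<in>S. hs B (f k))"
  by (induction S rule: finite_induct) (auto simp: hs_add_right hs_zero_right)

lemma hs_mm_left: fixes A :: "complex^'p^'m" and B :: "complex^'n^'p"
  shows "hs (A ** B) C = hs B (madj A ** C)"
proof -
  have "hs (A ** B) C = (\<Sum>i\<in>UNIV. \<Sum>j\<in>UNIV. \<Sum>k\<in>UNIV. cnj (A$i$k) * cnj (B$k$j) * C$i$j)"
    by (simp add: hs_def mm_nth sum_distrib_right)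
  also have "\<dots> = (\<Sum>j\<in>UNIV. \<Sum>i\<in>UNIV. \<Sum>k\<in>UNIV. cnj (A$i$k) * cnj (B$k$j) * C$i$j)"
    by (rule sum.swap)
  also have "\<dots> = (\<Sum>j\<in>UNIV. \<Sum>k\<in>UNIV. \<Sum>i\<in>UNIV. cnj (A$i$k) * cnj (B$k$j) * C$i$j)"
    by (rule sum.cong[OF refl], rule sum.swap)
  also have "\<dots> = (\<Sum>k\<in>UNIV. \<Sum>j\<in>UNIV. \<Sum>i\<in>UNIV. cnj (A$i$k) * cnj (B$k$j) * C$i$j)"
    by (rule sum.swap)
  also have "\<dots> = hs B (madj A ** C)"
    by (simp add: hs_def mm_nth sum_distrib_left algebra_simps)
  finally show ?thesis .
qed

lemma hs_mm_right: fixes A :: "complex^'n^'p" and B :: "complex^'p^'m"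
  shows "hs (B ** A) C = hs B (C ** madj A)"
proof -
  have "hs (B ** A) C = (\<Sum>i\<in>UNIV. \<Sum>j\<in>UNIV. \<Sum>k\<in>UNIV. cnj (B$i$k) * cnj (A$k$j) * C$i$j)"
    by (simp add: hs_def mm_nth sum_distrib_right)
  also have "\<dots> = (\<Sum>i\<in>UNIV. \<Sum>k\<in>UNIV. \<Sum>j\<in>UNIV. cnj (B$i$k) * cnj (A$k$j) * C$i$j)"
    by (rule sum.cong[OF refl], rule sum.swap)
  also have "\<dots> = hs B (C ** madj A)"
    by (simp add: hs_def mm_nth sum_distrib_left algebra_simps)
  finally show ?thesis .
qed

lemmas hs_lin = hs_add_left hs_add_right hs_diff_left hs_diff_right hs_msc_left hs_msc_right
  hs_sum_left hs_sum_right hs_zero_left hs_zero_right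

lemma hs3: "hs (A ** Y ** B) Z = hs Y (madj A ** Z ** madj B)"
  by (subst hs_mm_right, subst hs_mm_left, simp add: matrix_mul_assoc)
lemma hsL: "hs (A ** Y) Z = hs Y (madj A ** Z)"
  by (simp add: hs_mm_left)
lemma hsR: "hs (Y ** B) Z = hs Y (Z ** madj B)"
  by (simp add: hs_mm_right)

lemma mat_numeral_mult: "(numeral w :: complex^'n^'m) * A = msc (numeral w) A"
  by (simp add: vec_eq_iff)

definition Dk :: "complex^'n^'n \<Rightarrow> complex^'n^'n \<Rightarrow> complex^'n^'n" where
  "Dk M Z = msc 2 (madj M ** Z ** M) - (madj M ** M ** Z + Z ** (madj M ** M))"

definition Hp :: "complex^'n^'n \<Rightarrow> complex^'n^'n \<Rightarrow> complex^'n^'n" where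
  "Hp H Z = msc \<i> (H ** Z - Z ** H)"

definition phi ::
  "complex^'n^'n \<Rightarrow> 'k set \<Rightarrow> ('k \<Rightarrow> complex^'n^'n) \<Rightarrow> ('k \<Rightarrow> real)
     \<Rightarrow> complex^'n^'n \<Rightarrow> complex^'n^'n" where
  "phi H K L \<gamma> Z = Hp H Z + (\<Sum>k\<in>K. msc (complex_of_real (\<gamma> k)) (Dk (L k) Z))"

lemma msc2: "msc 2 M = M + M" by (simp add: vec_eq_iff)
lemma msc_negi: "msc (- c) M = - msc c M" by (simp add: vec_eq_iff)
lemma madj_neg: "madj (- A) = - madj A" by (simp add: vec_eq_iff)

lemma grp6: fixes a b c d e f :: "complex^'n^'n"
  shows "msc 2 a - (e + f) = (msc 2 c - (d + f)) + (msc 2 b - (d + e)) + msc 2 (a - b - c + d)"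
  by (simp add: vec_eq_iff algebra_simps)

lemma Dk_diss: fixes M Z :: "complex^'n^'n"
  shows "Dk M (madj Z ** Z) = madj Z ** Dk M Z + madj (Dk M Z) ** Z
     + msc 2 (madj (Z ** M - M ** Z) ** (Z ** M - M ** Z))"
proof -
  have e1: "Dk M (madj Z ** Z) = msc 2 (madj M ** madj Z ** Z ** M) - (madj M ** M ** madj Z ** Z + madj Z ** Z ** madj M ** M)"
    unfolding Dk_def by (simp only: matrix_mul_assoc)
  have e2: "madj Z ** Dk M Z = msc 2 (madj Z ** madj M ** Z ** M) - (madj Z ** madj M ** M ** Z + madj Z ** Z ** madj M ** M)"
    unfolding Dk_def by (simp only: mm_diff_right mm_add_right mm_msc_right matrix_mul_assoc)
  have e3: "madj (Dk M Z) ** Z = msc 2 (madj M ** madj Z ** M ** Z) - (madj Z ** madj M ** M ** Z + madj M ** M ** madj Z ** Z)"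
    unfolding Dk_def by (simp only: madj_diff madj_add madj_msc madj_mm madj_madj complex_cnj_numeral
       mm_diff_left mm_add_left mm_msc_left matrix_mul_assoc)
  have e4: "madj (Z ** M - M ** Z) ** (Z ** M - M ** Z) = madj M ** madj Z ** Z ** M - madj M ** madj Z ** M ** Z
      - madj Z ** madj M ** Z ** M + madj Z ** madj M ** M ** Z"
    by (simp only: madj_diff madj_mm mm_diff_left mm_diff_right matrix_mul_assoc) (simp add: algebra_simps)
  show ?thesis unfolding e1 e2 e3 e4 by (rule grp6)
qed

lemma Hp_diss: fixes H Z :: "complex^'n^'n" assumes "madj H = H"
  shows "Hp H (madj Z ** Z) = madj Z ** Hp H Z + madj (Hp H Z) ** Z"
  unfolding Hp_def
  by (simp add: assms msc_negi mm_dist madj_add madj_diff madj_msc madj_mm matrix_mul_assoc msc_diff algebra_simps)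

lemma phi_diss: fixes H Z :: "complex^'n^'n" assumes "madj H = H" "finite K"
  shows "phi H K L \<gamma> (madj Z ** Z) = madj Z ** phi H K L \<gamma> Z + madj (phi H K L \<gamma> Z) ** Z
     + (\<Sum>k\<in>K. msc (complex_of_real (2 * \<gamma> k)) (madj (Z ** L k - L k ** Z) ** (Z ** L k - L k ** Z)))"
proof -
  have "phi H K L \<gamma> (madj Z ** Z) = Hp H (madj Z ** Z) + (\<Sum>k\<in>K. msc (complex_of_real (\<gamma> k)) (Dk (L k) (madj Z ** Z)))"
    by (simp add: phi_def)
  also have "\<dots> = (madj Z ** Hp H Z + madj (Hp H Z) ** Z) + (\<Sum>k\<in>K.
      msc (complex_of_real (\<gamma> k)) (madj Z ** Dk (L k) Z) + msc (complex_of_real (\<gamma> k)) (madj (Dk (L k) Z) ** Z)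
     + msc (complex_of_real (2 * \<gamma> k)) (madj (Z ** L k - L k ** Z) ** (Z ** L k - L k ** Z)))"
    by (simp add: Hp_diss assms Dk_diss msc_add msc_msc mult.commute)
  also have "\<dots> = madj Z ** phi H K L \<gamma> Z + madj (phi H K L \<gamma> Z) ** Z
     + (\<Sum>k\<in>K. msc (complex_of_real (2 * \<gamma> k)) (madj (Z ** L k - L k ** Z) ** (Z ** L k - L k ** Z)))"
    by (simp add: phi_def mm_dist assms madj_add madj_sum madj_msc sum.distrib)
  finally show ?thesis .
qed

lemma liou_alt: "liouvillian H K L \<gamma> \<rho> = msc (-1) (Hp H \<rho>) + (\<Sum>k\<in>K. msc (complex_of_real (\<gamma> k)) 
   (msc 2 (L k ** \<rho> ** madj (L k)) - (madj (L k) ** L k ** \<rho> + \<rho> ** (madj (L k) ** L k))))"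
  by (simp add: liouvillian_def Hp_def msc_msc)

lemma liou_add: assumes "finite K"
  shows "liouvillian H K L \<gamma> (A + B) = liouvillian H K L \<gamma> A + liouvillian H K L \<gamma> B"
  unfolding liouvillian_def
  by (simp add: mm_dist msc_add msc_diff sum.distrib[symmetric] algebra_simps)

lemma liou_msc: assumes "finite K"
  shows "liouvillian H K L \<gamma> (msc c A) = msc c (liouvillian H K L \<gamma> A)"
  unfolding liouvillian_def
  by (simp add: mm_dist msc_add msc_diff msc_sum[OF assms] msc_msc ac_simps)

lemma liou_diff: assumes "finite K"
  shows "liouvillian H K L \<gamma> (A - B) = liouvillian H K L \<gamma> A - liouvillian H K L \<gamma> B"
  using liou_add[OF assms, of H L \<gamma> "A - B" B] by simp

lemma hs_liou: assumes "finite K" "madj H = H"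
  shows "hs (liouvillian H K L \<gamma> Y) Z = hs Y (phi H K L \<gamma> Z)"
  unfolding liouvillian_def phi_def Hp_def Dk_def
  apply (simp only: hs_add_left hs_diff_left hs_msc_left hs_sum_left[OF assms(1)] hs3[where Y=Y] hsL[where Y=Y] hsR[where Y=Y])
  apply (simp add: assms hs_lin madj_mm matrix_mul_assoc algebra_simps)
  done

lemma scaleR_cscale: "r *\<^sub>R (x::complex^'n) = cscale (complex_of_real r) x"
  by (simp add: vec_eq_iff) (simp add: scaleR_conv_of_real)

lemma scaleR_msc: "r *\<^sub>R (x::complex^'n^'m) = msc (complex_of_real r) x"
  by (simp add: vec_eq_iff) (simp add: scaleR_conv_of_real)

lemma vec_decomp: "(x::complex^'n) = (\<Sum>j\<in>UNIV. cscale (x$j) (axis j 1))"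
  by (simp add: vec_eq_iff sum_component axis_def if_distrib if_distribR cong: if_cong)

lemma cv_subspace_real: assumes "cv.subspace D" shows "subspace D"
  using assms unfolding subspace_def cv.subspace_def by (simp add: scaleR_cscale)

lemma proj_exists:
  fixes D :: "(complex^'n) set"
  assumes sD: "cv.subspace D"
  shows "\<exists>P. madj P = P \<and> P ** P = P \<and> (\<forall>x. P *v x \<in> D) \<and> (\<forall>d\<in>D. P *v d = d)"
proof -
  have rs: "subspace D" by (rule cv_subspace_real[OF sD])
  have ex: "\<exists>y. y \<in> D \<and> (\<forall>d\<in>D. cinner d (x - y) = 0)" for x
  proof -
    obtain y z where y: "y \<in> span D" and z: "\<And>w. w \<in> span D \<Longrightarrow> orthogonal z w" and xyz: "x = y + z"
      using orthogonal_subspace_decomp_exists by blast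
    have yD: "y \<in> D" using y rs by (metis span_eq_iff)
    have "cinner d z = 0" if dD: "d \<in> D" for d
    proof -
      have d2: "cscale \<i> d \<in> D" using sD dD by (rule cv.subspace_scale)
      have "Re (cinner d z) = 0"
        using z[OF span_base[OF dD]] by (simp add: Re_cinner orthogonal_def inner_commute)
      moreover have "Re (cinner (cscale \<i> d) z) = 0"
        using z[OF span_base[OF d2]] by (simp add: Re_cinner orthogonal_def inner_commute)
      ultimately show ?thesis by (simp add: cinner_cscale_left complex_eq_iff)
    qed
    then show ?thesis using yD xyz by auto
  qed
  have uniq: "y1 = y2" if "y1 \<in> D" "\<forall>d\<in>D. cinner d (x - y1) = 0" "y2 \<in> D" "\<forall>d\<in>D. cinner d (x - y2) = 0" for x y1 y2
  proof -
    have dD: "y1 - y2 \<in> D" using that sD by (simp add: cv.subspace_diff)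
    have "cinner (y1 - y2) (y1 - y2) = cinner (y1 - y2) (x - y2) - cinner (y1 - y2) (x - y1)"
      by (simp add: cinner_simps)
    also have "\<dots> = 0" using that dD by simp
    finally show ?thesis by (simp add: cinner_self_eq0)
  qed
  define p where "p x = (SOME y. y \<in> D \<and> (\<forall>d\<in>D. cinner d (x - y) = 0))" for x
  have p: "p x \<in> D \<and> (\<forall>d\<in>D. cinner d (x - p x) = 0)" for x
    unfolding p_def by (rule someI_ex[OF ex])
  have pchar: "y \<in> D \<Longrightarrow> \<forall>d\<in>D. cinner d (x - y) = 0 \<Longrightarrow> p x = y" for x y
    using uniq p by blast
  have padd: "p (x + y) = p x + p y" for x y
  proof (rule pchar)
    show "p x + p y \<in> D" using p sD by (simp add: cv.subspace_add)
    have e: "x + y - (p x + p y) = (x - p x) + (y - p y)" by (simp add: algebra_simps)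
    show "\<forall>d\<in>D. cinner d (x + y - (p x + p y)) = 0"
      using p unfolding e by (simp add: cinner_add_right)
  qed
  have pscale: "p (cscale c x) = cscale c (p x)" for c x
  proof (rule pchar)
    show "cscale c (p x) \<in> D" using p sD by (simp add: cv.subspace_scale)
    have e: "cscale c x - cscale c (p x) = cscale c (x - p x)" by (simp add: vec_eq_iff algebra_simps)
    show "\<forall>d\<in>D. cinner d (cscale c x - cscale c (p x)) = 0"
      using p unfolding e by (simp add: cinner_cscale_right)
  qed
  have pD: "d \<in> D \<Longrightarrow> p d = d" for d by (rule pchar) (auto simp: cinner_zero_right)
  have p0: "p 0 = 0" using pD sD cv.subspace_0 by blast
  have psum: "p (sum f S) = (\<Sum>j\<in>S. p (f j))" if "finite S" for f :: "'a \<Rightarrow> complex^'n" and S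
    using that by (induction S rule: finite_induct) (auto simp: p0 padd)
  define P :: "complex^'n^'n" where "P = (\<chi> i j. p (axis j 1) $ i)"
  have Pv: "P *v x = p x" for x
  proof -
    have "p x = (\<Sum>j\<in>UNIV. cscale (x$j) (p (axis j 1)))"
      by (subst vec_decomp) (simp add: psum pscale)
    then show ?thesis by (simp add: vec_eq_iff mv_nth P_def sum_component mult.commute)
  qed
  have herm: "cinner (P *v x) y = cinner x (P *v y)" for x y
  proof -
    have "cinner (p x) y = cinner (p x) (p y) + cinner (p x) (y - p y)" by (simp add: cinner_simps)
    moreover have "cinner x (p y) = cinner (p x) (p y) + cnj (cinner (p y) (x - p x))"
      by (simp add: cinner_simps cinner_sym[of "p y"])
    ultimately show ?thesis using p by (simp add: Pv)
  qed
  have "madj P = P"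
    unfolding matrix_eq
    by (metis cinner_adj herm vec_eq_cinner)
  moreover have "P ** P = P"
    unfolding matrix_eq by (simp add: mv_mm Pv p pD)
  moreover have "\<forall>x. P *v x \<in> D" by (simp add: Pv p)
  moreover have "\<forall>d\<in>D. P *v d = d" by (simp add: Pv pD)
  ultimately show ?thesis by blast
qed

locale setting =
  fixes H :: "complex^'n^'n" and K :: "'k set" and L :: "'k \<Rightarrow> complex^'n^'n"
    and \<gamma> :: "'k \<Rightarrow> real" and P :: "complex^'n^'n"
  assumes finK: "finite K" and herm: "madj H = H" and gpos: "\<forall>k\<in>K. \<gamma> k > 0"
    and Padj: "madj P = P" and Pidem: "P ** P = P"
    and PD: "\<forall>x. P *v x \<in> dark_space H K L" and PDd: "\<forall>d\<in>dark_space H K L. P *v d = d"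
begin

definition Q :: "complex^'n^'n" where "Q = mat 1 - P"

abbreviation "DS \<equiv> dark_space H K L"
abbreviation "Lv \<equiv> liouvillian H K L \<gamma>"

lemma DS_span: "DS = cv.span {\<phi>. dark_state H K L \<phi>}"
  by (simp add: dark_space_def cspan_eq)

lemma DS_sub: "cv.subspace DS"
  by (simp add: DS_span)

lemma dark_in_DS: "dark_state H K L \<phi> \<Longrightarrow> \<phi> \<in> DS"
  by (simp add: DS_span cv.span_base)

lemma L_DS: assumes "k \<in> K" "d \<in> DS" shows "L k *v d = 0"
  using assms(2) unfolding DS_span
proof (induction rule: cv.span_induct_alt)
  case base then show ?case by (simp add: mv_zero_right)
next
  case (step c x y)
  then show ?case using assms(1) by (simp add: mv_add_right mv_cscale_right dark_state_def vec_eq_iff)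
qed

lemma H_DS: assumes "d \<in> DS" shows "H *v d \<in> DS"
  using assms unfolding DS_span
proof (induction rule: cv.span_induct_alt)
  case base then show ?case by (simp add: mv_zero_right cv.span_zero)
next
  case (step c x y)
  then obtain \<omega> where "H *v x = cscale (complex_of_real \<omega>) x" by (auto simp: dark_state_def)
  then have "H *v x \<in> cv.span {\<phi>. dark_state H K L \<phi>}"
    using step by (simp add: cv.span_base cv.span_scale)
  then show ?case using step by (simp add: mv_add_right mv_cscale_right cv.span_add cv.span_scale)
qed

lemma LP: "k \<in> K \<Longrightarrow> L k ** P = 0"
  unfolding matrix_eq by (simp add: mv_mm L_DS PD mv_zero_right)

lemma PLadj: "k \<in> K \<Longrightarrow> P ** madj (L k) = 0"
  using LP[of k] by (metis madj_mm madj_zero Padj)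

lemma HP: "H ** P = P ** H"
proof -
  have 1: "P ** H ** P = H ** P"
    unfolding matrix_eq by (simp add: mv_mm PDd H_DS PD)
  have "P ** H = madj (H ** P)" by (simp add: madj_mm Padj herm)
  also have "\<dots> = madj (P ** H ** P)" by (simp add: 1)
  also have "\<dots> = P ** H ** P" by (simp add: madj_mm Padj herm matrix_mul_assoc)
  finally show ?thesis using 1 by simp
qed

lemma Qadj: "madj Q = Q" by (simp add: Q_def madj_diff Padj vec_eq_iff mat_def)
lemma QQ: "Q ** Q = Q" by (simp add: Q_def mm_dist Pidem)
lemma QP: "Q ** P = 0" by (simp add: Q_def mm_dist Pidem)
lemma PQ: "P ** Q = 0" by (simp add: Q_def mm_dist Pidem)
lemma QH: "Q ** H = H ** Q" by (simp add: Q_def mm_dist HP)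
lemma PQ1: "P + Q = mat 1" by (simp add: Q_def)
lemma QLL: "k \<in> K \<Longrightarrow> Q ** madj (L k) ** L k = madj (L k) ** L k"
  by (simp add: Q_def mm_dist PLadj)

lemma MQP: "M ** Q ** P = 0" by (simp add: QP flip: matrix_mul_assoc)
lemma MPQ: "M ** P ** Q = 0" by (simp add: PQ flip: matrix_mul_assoc)
lemma MQQ: "M ** Q ** Q = M ** Q" by (simp add: QQ flip: matrix_mul_assoc)
lemma MPP: "M ** P ** P = M ** P" by (simp add: Pidem flip: matrix_mul_assoc)
lemma MQH: "M ** Q ** H = M ** H ** Q" by (simp add: QH flip: matrix_mul_assoc)
lemma MPH: "M ** P ** H = M ** H ** P" by (simp add: HP flip: matrix_mul_assoc)
lemma MLP: "k \<in> K \<Longrightarrow> M ** L k ** P = 0" by (simp add: LP flip: matrix_mul_assoc)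
lemma MPLadj: "k \<in> K \<Longrightarrow> M ** P ** madj (L k) = 0" by (simp add: PLadj flip: matrix_mul_assoc)
lemma MQLL: "k \<in> K \<Longrightarrow> M ** Q ** madj (L k) ** L k = M ** madj (L k) ** L k"
  by (metis QLL matrix_mul_assoc)

lemmas red = QP PQ QQ Pidem MQP MPQ MQQ MPP QH MQH HP[symmetric] MPH LP MLP PLadj MPLadj QLL MQLL

lemma Lv_zero: "Lv 0 = 0"
  using liou_msc[OF finK, of H L \<gamma> 0 0] by simp

lemma Q_Lv_P: "Q ** Lv (P ** A) = 0"
  unfolding liouvillian_def
  by (simp add: mm_dist finK matrix_mul_assoc red cong: sum.cong)

lemma Lv_P_Q: "Lv (A ** P) ** Q = 0"
  unfolding liouvillian_def
  by (simp add: mm_dist finK matrix_mul_assoc red cong: sum.cong)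

lemma decomp: "X = P ** X + Q ** X ** P + Q ** X ** Q"
  by (simp add: Q_def mm_dist algebra_simps)

lemma QLvQ: "Q ** Lv X ** Q = Q ** Lv (Q ** X ** Q) ** Q"
proof -
  have "Lv X = Lv (P ** X) + Lv (Q ** X ** P) + Lv (Q ** X ** Q)"
    by (subst decomp) (simp add: liou_add finK)
  then have "Q ** Lv X ** Q = Q ** Lv (P ** X) ** Q + Q ** (Lv (Q ** X ** P) ** Q) + Q ** Lv (Q ** X ** Q) ** Q"
    by (simp add: mm_dist matrix_mul_assoc)
  then show ?thesis
    using Q_Lv_P[of X] Lv_P_Q[of "Q ** X"] by simp
qed

lemma QLvP: assumes "Q ** X ** Q = 0" shows "Q ** Lv X ** P = Q ** Lv (Q ** X ** P) ** P"
proof -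
  have "Lv X = Lv (P ** X) + Lv (Q ** X ** P)"
    by (subst decomp) (simp add: liou_add finK assms Lv_zero)
  then show ?thesis
    using Q_Lv_P[of X] by (simp add: mm_dist matrix_mul_assoc)
qed

lemma QLvP_formula:
  "Q ** Lv (Q ** X ** P) ** P = msc (- \<i>) (H ** (Q ** X ** P) - (Q ** X ** P) ** H)
     - (\<Sum>k\<in>K. msc (complex_of_real (\<gamma> k)) (madj (L k) ** L k ** (Q ** X ** P)))"
  unfolding liouvillian_def
  by (simp add: mm_dist finK matrix_mul_assoc red sum_negf cong: sum.cong)


end

lemma quad_zero: fixes a b :: real assumes "\<forall>t. 2*t*a + t^2*b \<le> 0" shows "a = 0"
proof -
  define t where "t = a / (\<bar>b\<bar> + 1)"
  have pos: "\<bar>b\<bar> + 1 > 0" by simp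
  have "2*t*a + t^2*b \<le> 0" using assms by simp
  then have "(2*t*a + t^2*b) * (\<bar>b\<bar> + 1)^2 \<le> 0" by (simp add: mult_nonpos_nonneg)
  moreover have tB: "t * (\<bar>b\<bar> + 1) = a" using pos by (simp add: t_def)
  moreover have "(2*t*a + t^2*b) * (\<bar>b\<bar> + 1)^2 = 2*a*(t * (\<bar>b\<bar> + 1))*(\<bar>b\<bar> + 1) + b*(t * (\<bar>b\<bar> + 1))^2"
    by (simp add: power2_eq_square algebra_simps)
  ultimately have "2*a*a*(\<bar>b\<bar> + 1) + b*a^2 \<le> 0" by simp
  moreover have "2*a*a*(\<bar>b\<bar> + 1) + b*a^2 = a^2 * (2*(\<bar>b\<bar> + 1) + b)"
    by (simp add: power2_eq_square algebra_simps)
  ultimately have "a^2 * (2*(\<bar>b\<bar> + 1) + b) \<le> 0" by simp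
  moreover have "2*(\<bar>b\<bar> + 1) + b > 0" by (simp add: abs_if)
  ultimately have "a^2 \<le> 0" by (simp add: mult_le_0_iff)
  then show ?thesis by simp
qed

lemma mv_scaleR_right: fixes A :: "complex^'n^'m" shows "A *v (r *\<^sub>R x) = r *\<^sub>R (A *v x)"
  by (simp add: scaleR_cscale mv_cscale_right)

lemma top_eig:
  fixes Z :: "complex^'n^'n" assumes "Z \<noteq> 0"
  obtains lam v where "lam > 0" "v \<noteq> 0" "\<forall>u. inner (Z *v u) (Z *v u) \<le> lam * inner u u"
    "inner (Z *v v) (Z *v v) = lam * inner v v"
proof -
  have cont: "continuous_on (sphere 0 1) (\<lambda>u. norm (Z *v u))"
    by (intro continuous_on_norm linear_continuous_on matrix_vector_mul_bounded_linear)
  have ne: "sphere (0::complex^'n) 1 \<noteq> {}" by simp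
  obtain v where v: "v \<in> sphere 0 1" and vmax: "\<And>y. y \<in> sphere 0 1 \<Longrightarrow> norm (Z *v y) \<le> norm (Z *v v)"
    using continuous_attains_sup[OF compact_sphere ne cont] by blast
  define lam where "lam = (norm (Z *v v))^2"
  have nv: "norm v = 1" using v by simp
  have bound: "inner (Z *v u) (Z *v u) \<le> lam * inner u u" for u
  proof (cases "u = 0")
    case True then show ?thesis by (simp add: mv_zero_right lam_def)
  next
    case False
    define y where "y = (1 / norm u) *\<^sub>R u"
    have "y \<in> sphere 0 1" using False by (simp add: y_def)
    then have "norm (Z *v y) \<le> norm (Z *v v)" by (rule vmax)
    moreover have "norm (Z *v y) = norm (Z *v u) / norm u"
      by (simp add: y_def mv_scaleR_right)
    ultimately have "norm (Z *v u) \<le> norm (Z *v v) * norm u"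
      using False by (simp add: field_simps)
    then have "(norm (Z *v u))^2 \<le> (norm (Z *v v) * norm u)^2"
      by (simp add: power_mono)
    then show ?thesis by (simp add: lam_def power2_norm_eq_inner[symmetric] power_mult_distrib)
  qed
  obtain x where x: "Z *v x \<noteq> 0"
    using assms by (metis matrix_eq matrix_vector_mult_0)
  have "0 < inner (Z *v x) (Z *v x)" using x by simp
  also have "\<dots> \<le> lam * inner x x" by (rule bound)
  finally have "lam > 0" using x by (smt (verit, del_insts) inner_ge_zero mult_nonpos_nonneg)
  moreover have "v \<noteq> 0" using nv by auto
  moreover have "inner (Z *v v) (Z *v v) = lam * inner v v"
    using nv by (simp add: lam_def power2_norm_eq_inner[symmetric])
  ultimately show ?thesis using that bound by blast
qed

lemma inner_ZZ: fixes Z :: "complex^'n^'n"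
  shows "inner ((madj Z ** Z) *v w) y = inner (Z *v w) (Z *v y)"
proof -
  have "cinner ((madj Z ** Z) *v w) y = cinner (Z *v w) (Z *v y)"
    by (simp add: mv_mm cinner_adj)
  then show ?thesis by (metis Re_cinner)
qed

lemma max_eig:
  fixes Z :: "complex^'n^'n"
  assumes bound: "\<forall>u. inner (Z *v u) (Z *v u) \<le> lam * inner u u"
    and eq: "inner (Z *v w) (Z *v w) = lam * inner w w"
  shows "(madj Z ** Z) *v w = cscale (complex_of_real lam) w"
proof -
  have key: "inner (Z *v w) (Z *v y) = lam * inner w y" for y
  proof -
    define a where "a = inner (Z *v w) (Z *v y) - lam * inner w y"
    define b where "b = inner (Z *v y) (Z *v y) - lam * inner y y"
    have "2*t*a + t^2*b \<le> 0" for t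
    proof -
      have e1: "inner (Z *v (w + t *\<^sub>R y)) (Z *v (w + t *\<^sub>R y)) =
          inner (Z *v w) (Z *v w) + 2*t*inner (Z *v w) (Z *v y) + t^2 * inner (Z *v y) (Z *v y)"
        by (simp add: mv_add_right mv_scaleR_right inner_add_left inner_add_right inner_commute[of "Z *v y" "Z *v w"] power2_eq_square algebra_simps)
      have e2: "inner (w + t *\<^sub>R y) (w + t *\<^sub>R y) = inner w w + 2*t*inner w y + t^2 * inner y y"
        by (simp add: inner_add_left inner_add_right inner_commute[of y w] power2_eq_square algebra_simps)
      have "inner (Z *v (w + t *\<^sub>R y)) (Z *v (w + t *\<^sub>R y)) \<le> lam * inner (w + t *\<^sub>R y) (w + t *\<^sub>R y)"
        using bound by blast
      then have ineq: "inner (Z *v w) (Z *v w) + 2*t*inner (Z *v w) (Z *v y) + t^2 * inner (Z *v y) (Z *v y)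
          \<le> lam * (inner w w + 2*t*inner w y + t^2 * inner y y)"
        unfolding e1 e2 .
      have "2*t*a + t^2*b = (inner (Z *v w) (Z *v w) + 2*t*inner (Z *v w) (Z *v y) + t^2 * inner (Z *v y) (Z *v y))
          - lam * (inner w w + 2*t*inner w y + t^2 * inner y y)"
        by (simp add: a_def b_def eq algebra_simps)
      then show ?thesis using ineq by linarith
    qed
    then have "a = 0" by (intro quad_zero) blast
    then show ?thesis by (simp add: a_def)
  qed
  define r where "r = (madj Z ** Z) *v w - lam *\<^sub>R w"
  have "inner r r = 0"
    using key[of r] by (simp add: r_def inner_diff_left inner_ZZ)
  then have "r = 0" by simp
  then show ?thesis by (simp add: r_def scaleR_cscale)
qed

lemma eig_eq: fixes Z :: "complex^'n^'n"
  assumes "(madj Z ** Z) *v w = cscale (complex_of_real lam) w"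
  shows "inner (Z *v w) (Z *v w) = lam * inner w w"
proof -
  have "inner (Z *v w) (Z *v w) = inner ((madj Z ** Z) *v w) w" by (simp add: inner_ZZ)
  also have "\<dots> = lam * inner w w" by (simp add: assms scaleR_cscale[symmetric])
  finally show ?thesis .
qed

lemma Hp_quad: assumes "madj H = H" "madj W = W" "W *v u = cscale (complex_of_real lam) u"
  shows "cinner u (Hp H W *v u) = 0"
proof -
  have 1: "Hp H W *v u = cscale \<i> (H *v (W *v u) - W *v (H *v u))"
    by (simp add: Hp_def mv_msc mv_diff_left mv_mm)
  have 2: "cinner u (H *v (W *v u)) = complex_of_real lam * cinner u (H *v u)"
    by (simp add: assms(3) mv_cscale_right cinner_cscale_right)
  have "cinner u (W *v (H *v u)) = cinner (W *v u) (H *v u)"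
    by (simp add: cinner_adj assms(2))
  also have "\<dots> = complex_of_real lam * cinner u (H *v u)"
    by (simp add: assms(3) cinner_cscale_left)
  finally show ?thesis using 1 2 by (simp add: cinner_cscale_right cinner_diff_right)
qed

lemma Dk_quad: fixes Z :: "complex^'n^'n"
  assumes W: "W = madj Z ** Z" and ev: "W *v u = cscale (complex_of_real lam) u"
  shows "Re (cinner u (Dk M W *v u)) = 2 * (inner (Z *v (M *v u)) (Z *v (M *v u)) - lam * inner (M *v u) (M *v u))"
proof -
  have Wa: "madj W = W" by (simp add: W madj_mm)
  have 1: "Dk M W *v u = cscale 2 (madj M *v (W *v (M *v u))) - (madj M *v (M *v (W *v u)) + W *v (madj M *v (M *v u)))"
    by (simp add: Dk_def mv_msc mv_diff_left mv_add_left mv_mm)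
  have 2: "cinner u (madj M *v (W *v (M *v u))) = cinner (Z *v (M *v u)) (Z *v (M *v u))"
    by (simp add: cinner_adj[symmetric] W mv_mm)
  have 3: "cinner u (madj M *v (M *v (W *v u))) = complex_of_real lam * cinner (M *v u) (M *v u)"
    by (simp add: cinner_adj[symmetric] ev mv_cscale_right cinner_cscale_right)
  have "cinner u (W *v (madj M *v (M *v u))) = cinner (W *v u) (madj M *v (M *v u))"
    by (simp add: cinner_adj Wa)
  also have "\<dots> = complex_of_real lam * cinner (M *v u) (M *v u)"
    by (simp add: ev cinner_cscale_left cinner_adj[symmetric] mv_cscale_right)
  finally have 4: "cinner u (W *v (madj M *v (M *v u))) = complex_of_real lam * cinner (M *v u) (M *v u)" .
  show ?thesis
    unfolding 1 by (simp add: cinner_diff_right cinner_add_right cinner_cscale_right 2 3 4 Re_cinner)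
qed

lemma herm_real: assumes "madj H = H" shows "Im (cinner w (H *v w)) = 0"
proof -
  have "cinner w (H *v w) = cinner (H *v w) w" by (simp add: cinner_adj assms)
  also have "\<dots> = cnj (cinner w (H *v w))" by (rule cinner_sym)
  finally show ?thesis by (metis Reals_cnj_iff complex_is_Real_iff)
qed

context setting
begin

lemma phi_quad_b: fixes Z :: "complex^'n^'n"
  assumes W: "W = madj Z ** Z" and ev: "W *v u = cscale (complex_of_real lam) u"
  shows "Re (cinner u (phi H K L \<gamma> W *v u)) = (\<Sum>k\<in>K. \<gamma> k * (2 * (inner (Z *v (L k *v u)) (Z *v (L k *v u)) - lam * inner (L k *v u) (L k *v u))))"
proof -
  have Wa: "madj W = W" by (simp add: W madj_mm)
  have "phi H K L \<gamma> W *v u = Hp H W *v u + (\<Sum>k\<in>K. cscale (complex_of_real (\<gamma> k)) (Dk (L k) W *v u))"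
    by (simp add: phi_def mv_add_left mv_sum finK mv_msc)
  then have "cinner u (phi H K L \<gamma> W *v u) = cinner u (Hp H W *v u) + (\<Sum>k\<in>K. complex_of_real (\<gamma> k) * cinner u (Dk (L k) W *v u))"
    by (simp add: cinner_add_right cinner_sum_right finK cinner_cscale_right)
  also have "\<dots> = (\<Sum>k\<in>K. complex_of_real (\<gamma> k) * cinner u (Dk (L k) W *v u))"
    using Hp_quad[OF herm Wa ev] by simp
  finally show ?thesis using Dk_quad[OF W ev] by (simp add: Re_sum)
qed

lemma phi_quad_a: fixes Z :: "complex^'n^'n"
  shows "Re (cinner u (phi H K L \<gamma> (madj Z ** Z) *v u)) = 2 * Re (cinner (Z *v u) (phi H K L \<gamma> Z *v u))
     + (\<Sum>k\<in>K. 2 * \<gamma> k * inner ((Z ** L k - L k ** Z) *v u) ((Z ** L k - L k ** Z) *v u))"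
proof -
  let ?p = "phi H K L \<gamma> Z"
  let ?C = "\<lambda>k. Z ** L k - L k ** Z"
  have "phi H K L \<gamma> (madj Z ** Z) *v u = madj Z *v (?p *v u) + madj ?p *v (Z *v u)
      + (\<Sum>k\<in>K. cscale (complex_of_real (2 * \<gamma> k)) (madj (?C k) *v (?C k *v u)))"
    by (simp add: phi_diss[OF herm finK] mv_add_left mv_sum finK mv_msc mv_mm)
  then have "cinner u (phi H K L \<gamma> (madj Z ** Z) *v u) = cinner (Z *v u) (?p *v u) + cinner (?p *v u) (Z *v u)
      + (\<Sum>k\<in>K. complex_of_real (2 * \<gamma> k) * cinner (?C k *v u) (?C k *v u))"
    by (simp add: cinner_add_right cinner_sum_right finK cinner_cscale_right cinner_adj[symmetric])
  moreover have "Re (cinner (?p *v u) (Z *v u)) = Re (cinner (Z *v u) (?p *v u))"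
    by (subst cinner_sym) simp
  ultimately show ?thesis by (simp add: Re_sum Re_cinner)
qed

lemma Qv_DS: "d \<in> DS \<Longrightarrow> Q *v d = 0"
  by (simp add: Q_def mv_diff_left PDd)

lemma QQ_zero:
  assumes noS: "\<not> (\<exists>S. csubspace S \<and> S \<noteq> {0}
               \<and> (\<forall>s\<in>S. \<forall>d\<in>DS. cinner s d = 0)
               \<and> (\<forall>k\<in>K. \<forall>s\<in>S. L k *v s \<in> S))"
    and eig: "Lv X = msc (\<i> * complex_of_real \<Lambda>) X"
  shows "Q ** X ** Q = 0"
proof (rule ccontr)
  define c where "c = \<i> * complex_of_real \<Lambda>"
  define Y0 where "Y0 = Q ** X ** Q"
  assume "Q ** X ** Q \<noteq> 0"
  then have Y0ne: "Y0 \<noteq> 0" by (simp add: Y0_def)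
  define T where "T Y = Q ** Lv (Q ** Y ** Q) ** Q - msc c (Q ** Y ** Q) + (Y - Q ** Y ** Q)" for Y
  define Ts where "Ts Z = Q ** phi H K L \<gamma> (Q ** Z ** Q) ** Q - msc (cnj c) (Q ** Z ** Q) + (Z - Q ** Z ** Q)" for Z
  have Tadd: "T (A + B) = T A + T B" for A B
  proof -
    have e1: "Q ** (A + B) ** Q = Q ** A ** Q + Q ** B ** Q" by (simp only: mm_add_left mm_add_right)
    have e2: "Lv (Q ** A ** Q + Q ** B ** Q) = Lv (Q ** A ** Q) + Lv (Q ** B ** Q)"
      by (rule liou_add[OF finK])
    have g: "\<And>a1 a2 m1 m2 A B q1 q2 :: complex^'n^'n.
      (a1 + a2) - (m1 + m2) + ((A + B) - (q1 + q2)) = (a1 - m1 + (A - q1)) + (a2 - m2 + (B - q2))"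
      by (simp add: algebra_simps)
    show ?thesis unfolding T_def e1 e2 by (simp only: mm_add_left mm_add_right msc_add g)
  qed
  have Tsc: "T (msc a A) = msc a (T A)" for a A
  proof -
    have e1: "Q ** msc a A ** Q = msc a (Q ** A ** Q)" by (simp only: mm_msc_left mm_msc_right)
    have e2: "msc c (msc a M) = msc a (msc c M)" for M by (simp add: msc_msc mult.commute)
    show ?thesis unfolding T_def e1 liou_msc[OF finK] e2
      by (simp only: mm_msc_left mm_msc_right msc_add msc_diff)
  qed
  have lin: "linear T"
    by (rule linearI) (simp_all add: Tadd scaleR_msc Tsc)
  have hsQ: "hs (Q ** M ** Q) N = hs M (Q ** N ** Q)" for M N
    by (simp add: hs3 Qadj)
  have hsT: "hs (T Y) Z = hs Y (Ts Z)" for Y Z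
  proof -
    have "hs (T Y) Z = hs (Lv (Q ** Y ** Q)) (Q ** Z ** Q) - cnj c * hs Y (Q ** Z ** Q) + (hs Y Z - hs Y (Q ** Z ** Q))"
      unfolding T_def by (simp add: hs_add_left hs_diff_left hs_msc_left hsQ)
    also have "\<dots> = hs Y (Ts Z)"
      unfolding Ts_def by (simp add: hs_liou finK herm hsQ hs_add_right hs_diff_right hs_msc_right)
    finally show ?thesis .
  qed
  have QY0: "Q ** Y0 ** Q = Y0" by (simp add: Y0_def MQQ QQ matrix_mul_assoc)
  have "Q ** Lv Y0 ** Q = Q ** Lv X ** Q" unfolding Y0_def by (rule QLvQ[symmetric])
  also have "\<dots> = msc c Y0" by (simp add: eig c_def Y0_def mm_dist)
  finally have "T Y0 = 0" by (simp add: T_def QY0)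
  moreover have "T 0 = 0" using lin by (rule linear_0)
  ultimately have "\<not> inj T" using Y0ne by (metis injD)
  then obtain a where a0: "a \<noteq> 0" and ha: "\<forall>x. a \<bullet> T x = 0"
    using linear_singular_into_hyperplane[OF lin] by blast
  have "a \<bullet> T (Ts a) = T (Ts a) \<bullet> a" by (rule inner_commute)
  also have "\<dots> = Re (hs (T (Ts a)) a)" by (rule inner_hs)
  also have "\<dots> = Re (hs (Ts a) (Ts a))" by (simp add: hsT)
  also have "\<dots> = inner (Ts a) (Ts a)" by (simp add: inner_hs)
  finally have "inner (Ts a) (Ts a) = a \<bullet> T (Ts a)" by simp
  then have Tsa: "Ts a = 0" using ha by simp
  define Z where "Z = a"
  have Zne: "Z \<noteq> 0" using a0 by (simp add: Z_def)
  have V: "Q ** phi H K L \<gamma> (Q ** Z ** Q) ** Q - msc (cnj c) (Q ** Z ** Q) = 0"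
  proof -
    have "Q ** Ts Z ** Q = Q ** phi H K L \<gamma> (Q ** Z ** Q) ** Q - msc (cnj c) (Q ** Z ** Q)"
      unfolding Ts_def by (simp add: mm_dist matrix_mul_assoc MQQ QQ)
    then show ?thesis using Tsa by (simp add: Z_def)
  qed
  then have "Z - Q ** Z ** Q = 0" using Tsa by (simp add: Ts_def Z_def)
  then have ZQ: "Q ** Z ** Q = Z" by simp
  then have QphiQ: "Q ** phi H K L \<gamma> Z ** Q = msc (cnj c) Z" using V by simp
  have QZ: "Q ** Z = Z" by (metis ZQ QQ matrix_mul_assoc)
  have ZQ2: "Z ** Q = Z" by (metis ZQ QQ matrix_mul_assoc)
  have QZa: "Q ** madj Z = madj Z" by (metis ZQ2 madj_mm Qadj)
  obtain lam v where lam0: "lam > 0" and v0: "v \<noteq> 0"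
    and bound: "\<forall>u. inner (Z *v u) (Z *v u) \<le> lam * inner u u"
    and veq: "inner (Z *v v) (Z *v v) = lam * inner v v"
    using top_eig[OF Zne] by blast
  define W where "W = madj Z ** Z"
  define E where "E = {u. W *v u = cscale (complex_of_real lam) u}"
  have QW: "Q ** W = W" by (simp add: W_def matrix_mul_assoc QZa)
  have uQ: "Q *v u = u" if "u \<in> E" for u
  proof -
    have Wu: "W *v u = cscale (complex_of_real lam) u" using that by (simp add: E_def)
    have "u = cscale (complex_of_real (1/lam)) (W *v u)" using lam0 Wu by (simp add: vec_eq_iff)
    moreover have "Q *v (W *v u) = W *v u" by (simp add: mv_mm[symmetric] QW)
    ultimately show ?thesis by (metis mv_cscale_right)
  qed
  have Emax: "u \<in> E \<longleftrightarrow> inner (Z *v u) (Z *v u) = lam * inner u u" for u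
    using max_eig[OF bound, of u] eig_eq[of Z u lam] by (auto simp: E_def W_def)
  have csub: "csubspace E"
    unfolding csubspace_def E_def
    by (simp add: mv_zero_right mv_add_right mv_cscale_right vec_eq_iff algebra_simps)
  have Ene: "E \<noteq> {0}" using v0 veq Emax by blast
  have orth: "\<forall>s\<in>E. \<forall>d\<in>DS. cinner s d = 0"
  proof (intro ballI)
    fix s d assume s: "s \<in> E" and d: "d \<in> DS"
    have "cinner s d = cinner (Q *v s) d" using uQ[OF s] by simp
    also have "\<dots> = cinner s (Q *v d)" by (simp add: cinner_adj Qadj)
    also have "\<dots> = 0" by (simp add: Qv_DS d cinner_zero_right)
    finally show "cinner s d = 0" .
  qed
  have inv: "\<forall>k\<in>K. \<forall>s\<in>E. L k *v s \<in> E"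
  proof (intro ballI)
    fix k s assume k: "k \<in> K" and s: "s \<in> E"
    have Ws: "W *v s = cscale (complex_of_real lam) s" using s by (simp add: E_def)
    define f where "f j = \<gamma> j * (2 * (inner (Z *v (L j *v s)) (Z *v (L j *v s)) - lam * inner (L j *v s) (L j *v s)))" for j
    have fle: "f j \<le> 0" if "j \<in> K" for j
    proof -
      have "inner (Z *v (L j *v s)) (Z *v (L j *v s)) \<le> lam * inner (L j *v s) (L j *v s)"
        using bound by blast
      then have "2 * (inner (Z *v (L j *v s)) (Z *v (L j *v s)) - lam * inner (L j *v s) (L j *v s)) \<le> 0"
        by simp
      moreover have "\<gamma> j \<ge> 0" using gpos that by (simp add: less_imp_le)
      ultimately show ?thesis unfolding f_def by (metis mult_nonneg_nonpos)
    qed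
    have b: "Re (cinner s (phi H K L \<gamma> W *v s)) = (\<Sum>j\<in>K. f j)"
      using phi_quad_b[OF W_def Ws] by (simp add: f_def)
    have "cinner (Z *v s) (phi H K L \<gamma> Z *v s) = cinner (Q *v (Z *v s)) (phi H K L \<gamma> Z *v s)"
      by (simp add: mv_mm[symmetric] QZ)
    also have "\<dots> = cinner (Z *v s) ((Q ** phi H K L \<gamma> Z ** Q) *v s)"
      by (simp add: cinner_adj Qadj mv_mm uQ[OF s])
    also have "\<dots> = cnj c * cinner (Z *v s) (Z *v s)"
      by (simp add: QphiQ mv_msc cinner_cscale_right)
    finally have "Re (cinner (Z *v s) (phi H K L \<gamma> Z *v s)) = 0"
      by (simp add: c_def cinner_self)
    then have a: "Re (cinner s (phi H K L \<gamma> W *v s)) = (\<Sum>j\<in>K. 2 * \<gamma> j * inner ((Z ** L j - L j ** Z) *v s) ((Z ** L j - L j ** Z) *v s))"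
      using phi_quad_a[of s Z] by (simp add: W_def)
    have "(\<Sum>j\<in>K. 2 * \<gamma> j * inner ((Z ** L j - L j ** Z) *v s) ((Z ** L j - L j ** Z) *v s)) \<ge> 0"
      using gpos by (intro sum_nonneg) (simp add: less_imp_le)
    then have "(\<Sum>j\<in>K. f j) \<ge> 0" using a b by simp
    then have "(\<Sum>j\<in>K. - f j) = 0"
      using fle by (simp add: sum_negf) (meson antisym sum_nonpos)
    then have "\<forall>j\<in>K. - f j = 0" using fle finK by (subst (asm) sum_nonneg_eq_0_iff) auto
    then have "f k = 0" using k by simp
    then have "inner (Z *v (L k *v s)) (Z *v (L k *v s)) = lam * inner (L k *v s) (L k *v s)"
      using gpos k by (auto simp: f_def)
    then show "L k *v s \<in> E" by (simp add: Emax)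
  qed
  show False using noS csub Ene orth inv by blast
qed

end

lemma mv_neg_left: fixes A :: "complex^'n^'m" shows "(- A) *v x = - (A *v x)"
  by (simp add: vec_eq_iff mv_nth sum_negf)

lemma cinner_neg_right: "cinner z (- x) = - cinner z x"
  by (simp add: cinner_def sum_negf)

lemma msc_swap: "msc \<i> (A - B) = msc (- \<i>) (B - A)"
  by (simp add: vec_eq_iff algebra_simps)

lemma liou_adj: assumes "finite K" "madj H = H"
  shows "madj (liouvillian H K L \<gamma> X) = liouvillian H K L \<gamma> (madj X)"
proof -
  have "madj (liouvillian H K L \<gamma> X) = msc \<i> (madj X ** H - H ** madj X)
     + (\<Sum>k\<in>K. msc (complex_of_real (\<gamma> k)) (msc 2 (L k ** madj X ** madj (L k))
          - (madj X ** (madj (L k) ** L k) + madj (L k) ** L k ** madj X)))"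
    unfolding liouvillian_def
    by (simp only: madj_add madj_diff madj_msc madj_sum[OF assms(1)] madj_mm madj_madj assms(2)
        matrix_mul_assoc complex_cnj_numeral complex_cnj_complex_of_real complex_cnj_minus complex_cnj_i minus_minus)
  also have "\<dots> = liouvillian H K L \<gamma> (madj X)"
    unfolding liouvillian_def msc_swap by (simp add: add.commute)
  finally show ?thesis .
qed

lemma mv_axis: "(A *v axis j 1) $ i = A $ i $ j"
  unfolding mv_nth axis_def by (simp add: if_distrib if_distribR cong: if_cong)

lemma outer_sum: "A ** madj B = (\<Sum>j\<in>UNIV. outer (A *v axis j 1) (B *v axis j 1))"
  by (simp add: vec_eq_iff mm_nth sum_component mv_axis)

lemma outer_add_left: "outer (a + b) c = outer a c + outer b c" by (simp add: vec_eq_iff algebra_simps)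
lemma outer_add_right: "outer c (a + b) = outer c a + outer c b" by (simp add: vec_eq_iff algebra_simps)
lemma outer_scale_left: "outer (cscale s a) c = msc s (outer a c)" by (simp add: vec_eq_iff)
lemma outer_scale_right: "outer c (cscale s a) = msc (cnj s) (outer c a)" by (simp add: vec_eq_iff)
lemma outer_zero_left: "outer 0 c = 0" by (simp add: vec_eq_iff)
lemma outer_zero_right: "outer c 0 = 0" by (simp add: vec_eq_iff)

lemma outer_span:
  assumes a: "a \<in> cv.span Gs" and b: "b \<in> cv.span Gs"
  shows "outer a b \<in> cm.span {outer \<phi> \<psi> | \<phi> \<psi>. \<phi> \<in> Gs \<and> \<psi> \<in> Gs}"
proof -
  let ?O = "{outer \<phi> \<psi> | \<phi> \<psi>. \<phi> \<in> Gs \<and> \<psi> \<in> Gs}"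
  have 1: "outer a \<psi> \<in> cm.span ?O" if "\<psi> \<in> Gs" for \<psi>
    using a
  proof (induction rule: cv.span_induct_alt)
    case base then show ?case by (simp add: outer_zero_left cm.span_zero)
  next
    case (step c x y)
    have "outer x \<psi> \<in> cm.span ?O" using step that by (blast intro: cm.span_base)
    then show ?case using step by (simp add: outer_add_left outer_scale_left cm.span_add cm.span_scale)
  qed
  show ?thesis using b
  proof (induction rule: cv.span_induct_alt)
    case base then show ?case by (simp add: outer_zero_right cm.span_zero)
  next
    case (step c x y)
    then show ?case using 1 by (simp add: outer_add_right outer_scale_right cm.span_add cm.span_scale)
  qed
qed

lemma repr:
  fixes X P :: "complex^'n^'n"
  assumes XP: "X = P ** X ** P" and Pa: "madj P = P" and Pi: "P ** P = P"
    and PD: "\<forall>x. P *v x \<in> cv.span Gs"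
  shows "\<exists>F c. finite F \<and> (\<forall>(\<phi>, \<psi>)\<in>F. \<phi> \<in> Gs \<and> \<psi> \<in> Gs)
           \<and> X = (\<Sum>(\<phi>, \<psi>)\<in>F. msc (c (\<phi>, \<psi>)) (outer \<phi> \<psi>))"
proof -
  let ?O = "{outer \<phi> \<psi> | \<phi> \<psi>. \<phi> \<in> Gs \<and> \<psi> \<in> Gs}"
  have "X ** madj P = X" using XP Pi Pa by (metis matrix_mul_assoc)
  then have Xs: "X = (\<Sum>j\<in>UNIV. outer (X *v axis j 1) (P *v axis j 1))" by (simp add: outer_sum)
  have Xv: "X *v x \<in> cv.span Gs" for x
  proof -
    have "X *v x = P *v ((X ** P) *v x)" by (subst XP) (simp add: mv_mm matrix_mul_assoc)
    then show ?thesis using PD by simp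
  qed
  have "X \<in> cm.span ?O"
    by (subst Xs, rule cm.span_sum, rule outer_span) (simp_all add: Xv PD)
  then obtain t r where t: "finite t" "t \<subseteq> ?O" and Xt: "X = (\<Sum>m\<in>t. msc (r m) m)"
    unfolding cm.span_explicit by blast
  define g where "g m = (SOME pr. fst pr \<in> Gs \<and> snd pr \<in> Gs \<and> m = outer (fst pr) (snd pr))" for m
  have g: "fst (g m) \<in> Gs \<and> snd (g m) \<in> Gs \<and> m = outer (fst (g m)) (snd (g m))" if mt: "m \<in> t" for m
  proof -
    obtain \<phi> \<psi> where "\<phi> \<in> Gs" "\<psi> \<in> Gs" "m = outer \<phi> \<psi>" using t mt by blast
    then have "\<exists>pr. fst pr \<in> Gs \<and> snd pr \<in> Gs \<and> m = outer (fst pr) (snd pr)" by (intro exI[of _ "(\<phi>, \<psi>)"]) simp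
    then show ?thesis unfolding g_def by (rule someI_ex)
  qed
  have inj: "inj_on g t"
    by (rule inj_onI) (metis g)
  define c where "c pr = r (outer (fst pr) (snd pr))" for pr
  have "(\<Sum>(\<phi>, \<psi>)\<in>g ` t. msc (c (\<phi>, \<psi>)) (outer \<phi> \<psi>)) = (\<Sum>m\<in>t. msc (c (g m)) (outer (fst (g m)) (snd (g m))))"
    by (simp add: sum.reindex[OF inj] case_prod_beta)
  also have "\<dots> = (\<Sum>m\<in>t. msc (r m) m)"
    by (rule sum.cong[OF refl]) (metis c_def g)
  finally have "X = (\<Sum>(\<phi>, \<psi>)\<in>g ` t. msc (c (\<phi>, \<psi>)) (outer \<phi> \<psi>))" using Xt by simp
  moreover have "\<forall>pr\<in>g ` t. fst pr \<in> Gs \<and> snd pr \<in> Gs" using g by blast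
  then have "\<forall>(\<phi>, \<psi>)\<in>g ` t. \<phi> \<in> Gs \<and> \<psi> \<in> Gs" by (simp add: case_prod_unfold)
  ultimately show ?thesis using t(1) by blast
qed

context setting
begin

lemma QXP_zero:
  assumes eig: "Lv X = msc (\<i> * complex_of_real \<Lambda>) X" and QXQ: "Q ** X ** Q = 0"
  shows "Q ** X ** P = 0"
proof -
  define c where "c = \<i> * complex_of_real \<Lambda>"
  define Z where "Z = Q ** X ** P"
  have "Q ** Lv X ** P = msc c Z" by (simp add: eig c_def Z_def mm_msc_left mm_msc_right)
  then have eqZ: "msc (- \<i>) (H ** Z - Z ** H) - (\<Sum>k\<in>K. msc (complex_of_real (\<gamma> k)) (madj (L k) ** L k ** Z)) = msc c Z"
    using QLvP[OF QXQ] QLvP_formula[of X] by (simp add: Z_def)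
  have w0: "Z *v u = 0" if du: "dark_state H K L u" for u
  proof -
    obtain \<omega> where Hu: "H *v u = cscale (complex_of_real \<omega>) u" using du by (auto simp: dark_state_def)
    define w where "w = Z *v u"
    have e: "cscale (- \<i>) (H *v w - cscale (complex_of_real \<omega>) w)
        - (\<Sum>k\<in>K. cscale (complex_of_real (\<gamma> k)) (madj (L k) *v (L k *v w))) = cscale c w"
    proof -
      have "(msc (- \<i>) (H ** Z - Z ** H) - (\<Sum>k\<in>K. msc (complex_of_real (\<gamma> k)) (madj (L k) ** L k ** Z))) *v u
          = msc c Z *v u" by (simp only: eqZ)
      then show ?thesis by (simp add: mv_diff_left mv_neg_left mv_msc mv_sum finK mv_mm Hu mv_cscale_right w_def)
    qed
    have ci: "cinner w (cscale (- \<i>) (H *v w - cscale (complex_of_real \<omega>) w))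
        - (\<Sum>k\<in>K. complex_of_real (\<gamma> k) * cinner (L k *v w) (L k *v w)) = c * cinner w w"
    proof -
      have "cinner w (cscale (- \<i>) (H *v w - cscale (complex_of_real \<omega>) w)
        - (\<Sum>k\<in>K. cscale (complex_of_real (\<gamma> k)) (madj (L k) *v (L k *v w)))) = cinner w (cscale c w)"
        by (simp only: e)
      then show ?thesis
        by (simp add: cinner_diff_right cinner_sum_right finK cinner_cscale_right cinner_adj[symmetric])
    qed
    have hr: "Im (cinner w (H *v w)) = 0" by (rule herm_real[OF herm])
    have "Re (cinner w (cscale (- \<i>) (H *v w - cscale (complex_of_real \<omega>) w))) = 0"
      using hr by (simp add: cinner_neg_right cinner_cscale_right cinner_diff_right cinner_self)
    moreover have "Re (c * cinner w w) = 0" by (simp add: c_def cinner_self)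
    ultimately have "(\<Sum>k\<in>K. \<gamma> k * inner (L k *v w) (L k *v w)) = 0"
      using arg_cong[OF ci, of Re] by (simp add: Re_sum Re_cinner)
    then have "\<forall>k\<in>K. \<gamma> k * inner (L k *v w) (L k *v w) = 0"
      using finK gpos by (subst (asm) sum_nonneg_eq_0_iff) (auto intro: mult_nonneg_nonneg less_imp_le)
    then have Lw: "\<forall>k\<in>K. L k *v w = 0"
    proof (intro ballI)
      fix k assume k: "k \<in> K" and h: "\<forall>k\<in>K. \<gamma> k * inner (L k *v w) (L k *v w) = 0"
      have "\<gamma> k \<noteq> 0" using gpos k by fastforce
      then show "L k *v w = 0" using h k by (metis inner_eq_zero_iff mult_eq_0_iff)
    qed
    have s0: "(\<Sum>k\<in>K. cscale (complex_of_real (\<gamma> k)) (madj (L k) *v (L k *v w))) = 0"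
      by (rule sum.neutral) (simp add: Lw mv_zero_right vec_eq_iff)
    have eqv: "cscale (- \<i>) (H *v w - cscale (complex_of_real \<omega>) w) = cscale c w"
      using e unfolding s0 by simp
    have "H *v w - cscale (complex_of_real \<omega>) w = cscale \<i> (cscale (- \<i>) (H *v w - cscale (complex_of_real \<omega>) w))"
      by (simp add: vec_eq_iff)
    also have "\<dots> = cscale (complex_of_real (- \<Lambda>)) w"
      unfolding eqv by (simp add: vec_eq_iff c_def)
    finally have "H *v w = cscale (complex_of_real (\<omega> - \<Lambda>)) w"
      by (simp add: vec_eq_iff algebra_simps)
    then have "dark_state H K L w" using Lw unfolding dark_state_def by blast
    then have "P *v w = w" using PDd dark_in_DS by blast
    moreover have "P *v w = 0" by (simp add: w_def Z_def mv_mm[symmetric] matrix_mul_assoc PQ)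
    ultimately show ?thesis by (simp add: w_def)
  qed
  have Zd: "Z *v d = 0" if "d \<in> DS" for d
    using that unfolding DS_span
  proof (induction rule: cv.span_induct_alt)
    case base then show ?case by (simp add: mv_zero_right)
  next
    case (step c x y)
    then show ?case using w0 by (simp add: mv_add_right mv_cscale_right vec_eq_iff)
  qed
  have "Z ** P = Z" by (simp add: Z_def MPP)
  then have "Z *v x = 0" for x by (metis Zd PD mv_mm)
  then show ?thesis unfolding matrix_eq Z_def by (simp add: mv_zero_right)
qed

lemma decomp4: "X = P ** X ** P + P ** X ** Q + Q ** X ** P + Q ** X ** Q"
  by (simp add: Q_def mm_dist algebra_simps)

lemma X_PXP:
  assumes noS: "\<not> (\<exists>S. csubspace S \<and> S \<noteq> {0}
               \<and> (\<forall>s\<in>S. \<forall>d\<in>DS. cinner s d = 0)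
               \<and> (\<forall>k\<in>K. \<forall>s\<in>S. L k *v s \<in> S))"
    and eig: "Lv X = msc (\<i> * complex_of_real \<Lambda>) X"
  shows "X = P ** X ** P"
proof -
  have QXQ: "Q ** X ** Q = 0" by (rule QQ_zero[OF noS eig])
  have QXP: "Q ** X ** P = 0" by (rule QXP_zero[OF eig QXQ])
  have eig2: "Lv (madj X) = msc (\<i> * complex_of_real (- \<Lambda>)) (madj X)"
    using arg_cong[OF eig, of madj] by (simp add: liou_adj[OF finK herm] madj_msc)
  have "Q ** madj X ** Q = madj (Q ** X ** Q)" by (simp add: madj_mm Qadj matrix_mul_assoc)
  then have QXQ2: "Q ** madj X ** Q = 0" using QXQ by simp
  have "Q ** madj X ** P = 0" by (rule QXP_zero[OF eig2 QXQ2])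
  then have "madj (Q ** madj X ** P) = 0" by simp
  then have PXQ: "P ** X ** Q = 0" by (simp add: madj_mm Qadj Padj matrix_mul_assoc)
  show ?thesis using decomp4[of X] QXQ QXP PXQ by simp
qed

end

theorem theorem2:
  fixes H :: "complex^'n^'n" and K :: "'k set" and L :: "'k \<Rightarrow> complex^'n^'n"
    and \<gamma> :: "'k \<Rightarrow> real" and X :: "complex^'n^'n" and \<Lambda> :: real
  assumes "finite K"
    and "madj H = H"
    and "\<forall>k\<in>K. \<gamma> k > 0"
    and "\<not> (\<exists>S. csubspace S \<and> S \<noteq> {0}
               \<and> (\<forall>s\<in>S. \<forall>d\<in>dark_space H K L. cinner s d = 0)
               \<and> (\<forall>k\<in>K. \<forall>s\<in>S. L k *v s \<in> S))"
    and "X \<noteq> 0"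
    and "liouvillian H K L \<gamma> X = msc (\<i> * complex_of_real \<Lambda>) X"
  shows "\<exists>F c. finite F
           \<and> (\<forall>(\<phi>, \<psi>)\<in>F. dark_state H K L \<phi> \<and> dark_state H K L \<psi>)
           \<and> X = (\<Sum>(\<phi>, \<psi>)\<in>F. msc (c (\<phi>, \<psi>)) (outer \<phi> \<psi>))"
proof -
  have sub: "cv.subspace (dark_space H K L)"
    by (simp add: dark_space_def cspan_eq)
  obtain P where P1: "madj P = P" and P2: "P ** P = P" and P3: "\<forall>x. P *v x \<in> dark_space H K L"
    and P4: "\<forall>d\<in>dark_space H K L. P *v d = d"
    using proj_exists[OF sub] by blast
  interpret setting H K L \<gamma> P
    using assms(1-3) P1 P2 P3 P4 by unfold_locales auto
  have XP: "X = P ** X ** P" by (rule X_PXP[OF assms(4) assms(6)])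
  have PD': "\<forall>x. P *v x \<in> cv.span {\<phi>. dark_state H K L \<phi>}" using P3 by (simp add: DS_span)
  obtain F c where F: "finite F" "\<forall>(\<phi>, \<psi>)\<in>F. \<phi> \<in> {\<phi>. dark_state H K L \<phi>} \<and> \<psi> \<in> {\<phi>. dark_state H K L \<phi>}"
    and XF: "X = (\<Sum>(\<phi>, \<psi>)\<in>F. msc (c (\<phi>, \<psi>)) (outer \<phi> \<psi>))"
    using repr[OF XP P1 P2 PD'] by blast
  have "\<forall>(\<phi>, \<psi>)\<in>F. dark_state H K L \<phi> \<and> dark_state H K L \<psi>" using F(2) by simp
  then show ?thesis using F(1) XF by blast
qed

end
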